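(* Let $h>0$ and let $(\tau,\mu):\mathbb R\to\mathbb R^2$ be any solution of the system $\tau'=1+K(\tau,\mu)\mu$, $\mu'=-K(\tau,\mu)\tau$. Then $\tau$ has exactly one zero $s_0$, with $\tau<0$ on $(-\infty,s_0)$ and $\tau>0$ on $(s_0,+\infty)$. Consequently $r^2=\tau^2+\mu^2$ attains a global minimum (at $s_0$, its only critical point) and $r^2(s)\to+\infty$ as $s\to\pm\infty$.
   Context: Fix $h>0$. For $(\tau,\mu)\in\mathbb R^2$ put $r^2=\tau^2+\mu^2$ and define $K:\mathbb R^2\to\mathbb R$ by $$K(\tau,\mu)=\frac{2\big(\tau^2+h^2(1+\mu^2)\big)\tau+(h^2-1)(1+\mu^2)\mu}{(1+r^2)(h^2+r^2)}.$$ Consider the autonomous ODE system $\tau'=1+K(\tau,\mu)\mu$, $\mu'=-K(\tau,\mu)\tau$ for functions $s\mapsto(\tau(s),\mu(s))$; all its solutions are defined on $\mathbb R$. *)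

theory Defs
  imports "HOL-Analysis.Analysis"
begin

definition Kfun :: "real \<Rightarrow> real \<Rightarrow> real \<Rightarrow> real" where
  "Kfun h \<tau> \<mu> =
     (2 * (\<tau>^2 + h^2 * (1 + \<mu>^2)) * \<tau> + (h^2 - 1) * (1 + \<mu>^2) * \<mu>)
     / ((1 + (\<tau>^2 + \<mu>^2)) * (h^2 + (\<tau>^2 + \<mu>^2)))"

end

theory Submission
  imports Defs
begin


lemma slope_ge:
  fixes f f' :: "real \<Rightarrow> real"
  assumes d: "\<And>x. (f has_real_derivative f' x) (at x)" and "a \<le> b"
    and c: "\<And>x. a \<le> x \<Longrightarrow> x \<le> b \<Longrightarrow> f' x \<ge> c"
  shows "f b \<ge> f a + c * (b - a)"
proof -
  have "(\<lambda>x. f x - c * x) a \<le> (\<lambda>x. f x - c * x) b"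
  proof (rule DERIV_nonneg_imp_nondecreasing[OF \<open>a \<le> b\<close>])
    fix x assume "a \<le> x" "x \<le> b"
    have "((\<lambda>x. f x - c * x) has_real_derivative f' x - c) (at x)"
      using d[of x] by (auto intro!: derivative_eq_intros)
    then show "\<exists>y. ((\<lambda>x. f x - c * x) has_real_derivative y) (at x) \<and> 0 \<le> y"
      using c[OF \<open>a \<le> x\<close> \<open>x \<le> b\<close>] by auto
  qed
  then show ?thesis by (simp add: algebra_simps)
qed

lemma slope_le:
  fixes f f' :: "real \<Rightarrow> real"
  assumes d: "\<And>x. (f has_real_derivative f' x) (at x)" and "a \<le> b"
    and c: "\<And>x. a \<le> x \<Longrightarrow> x \<le> b \<Longrightarrow> f' x \<le> c"
  shows "f b \<le> f a + c * (b - a)"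
proof -
  have "(\<lambda>x. - f x) b \<ge> (\<lambda>x. - f x) a + (-c) * (b - a)"
    by (rule slope_ge[where f'="\<lambda>x. - f' x"]) (use d c \<open>a \<le> b\<close> in \<open>auto intro!: derivative_eq_intros\<close>)
  then show ?thesis by (simp add: algebra_simps)
qed

lemma cross:
  fixes f f' :: "real \<Rightarrow> real"
  assumes d: "\<And>x. (f has_real_derivative f' x) (at x)"
    and pos: "\<And>x. x \<ge> a \<Longrightarrow> f x = v \<Longrightarrow> f' x > 0"
    and fa: "f a \<ge> v" and t: "t > a"
  shows "f t > v"
proof (rule ccontr)
  assume "\<not> f t > v"
  hence ft: "f t \<le> v" by simp
  have cont: "\<And>x. isCont f x" using d DERIV_isCont by blast
  have "\<exists>a'. a \<le> a' \<and> a' < t \<and> f a' > v"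
  proof (cases "f a > v")
    case True then show ?thesis using t by auto
  next
    case False
    hence "f a = v" using fa by simp
    then obtain e where e: "e > 0" "\<And>h. h > 0 \<Longrightarrow> h < e \<Longrightarrow> f a < f (a + h)"
      using DERIV_pos_inc_right[OF d[of a] pos[OF order_refl]] by blast
    define h where "h = min e (t - a) / 2"
    have "h > 0" "h < e" "h < t - a" using e t by (auto simp: h_def)
    then show ?thesis using e(2)[of h] \<open>f a = v\<close> by (intro exI[of _ "a + h"]) auto
  qed
  then obtain a' where a': "a \<le> a'" "a' < t" "f a' > v" by blast
  define S where "S = {a'..t} \<inter> {x. f x \<le> v}"
  have cS: "closed S" unfolding S_def
    by (intro closed_Int closed_atLeastAtMost closed_Collect_le continuous_intros)
       (simp add: continuous_at_imp_continuous_on cont)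
  have "t \<in> S" using ft a' by (auto simp: S_def)
  hence neS: "S \<noteq> {}" by blast
  have bdd: "bdd_below S" unfolding S_def by (rule bdd_belowI[of _ a']) auto
  have mS: "Inf S \<in> S" by (rule closed_contains_Inf[OF neS bdd cS])
  define m where "m = Inf S"
  have mle: "\<And>x. x \<in> S \<Longrightarrow> m \<le> x" unfolding m_def using bdd by (simp add: cInf_lower)
  have m: "a' \<le> m" "m \<le> t" "f m \<le> v" using mS by (auto simp: S_def m_def)
  have "m \<noteq> a'" using m a' by auto
  hence ma: "a' < m" using m by simp
  have fm: "f m = v"
  proof (rule ccontr)
    assume "f m \<noteq> v"
    hence "f m < v" using m by simp
    then obtain x where x: "a' \<le> x" "x \<le> m" "f x = v"
      using IVT2[of f m v a'] a' ma cont by (auto)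
    hence "x \<in> S" using m by (auto simp: S_def)
    hence "m \<le> x" by (rule mle)
    thus False using x \<open>f m < v\<close> by auto
  qed
  obtain e where e: "e > 0" "\<And>h. h > 0 \<Longrightarrow> h < e \<Longrightarrow> f (m - h) < f m"
    using DERIV_pos_inc_left[OF d[of m] pos[OF _ fm]] m a' by fastforce
  define h where "h = min e (m - a') / 2"
  have "h > 0" "h < e" "h < m - a'" using e ma by (auto simp: h_def)
  hence "m - h \<in> S" using e(2)[of h] fm m by (auto simp: S_def)
  hence "m \<le> m - h" by (rule mle)
  thus False using \<open>h > 0\<close> by simp
qed

lemma Kneg: "Kfun h (-a) (-b) = - Kfun h a b"
  unfolding Kfun_def by (simp add: algebra_simps minus_divide_left)

lemma K0: assumes "h > 0" shows "1 + Kfun h 0 b * b \<ge> min 1 (h^2)"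
proof -
  have p: "h^2 + b^2 > 0" using assms by (simp add: add_pos_nonneg)
  have q: "1 + b^2 > 0" by (simp add: add_pos_nonneg)
  have "1 + Kfun h 0 b * b = h^2 * (1 + b^2) / (h^2 + b^2)"
  proof -
    have "Kfun h 0 b = (h^2 - 1) * b / (h^2 + b^2)"
      unfolding Kfun_def using q by simp
    hence "1 + Kfun h 0 b * b = 1 + (h^2 - 1) * b * b / (h^2 + b^2)" by simp
    also have "\<dots> = (h^2 + b^2 + (h^2 - 1) * b * b) / (h^2 + b^2)"
    proof -
      have ne: "h^2 + b^2 \<noteq> 0" using p by linarith
      show ?thesis by (simp only: add_divide_distrib[of "h^2 + b^2"] divide_self[OF ne])
    qed
    also have "\<dots> = h^2 * (1 + b^2) / (h^2 + b^2)"
      by (simp add: algebra_simps power2_eq_square)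
    finally show ?thesis .
  qed
  also have "\<dots> \<ge> min 1 (h^2)"
  proof -
    have "min 1 (h^2) * (h^2 + b^2) \<le> h^2 * (1 + b^2)"
    proof -
      have "min 1 (h^2) * h^2 \<le> h^2" using mult_right_mono[of "min 1 (h^2)" 1 "h^2"] by simp
      moreover have "min 1 (h^2) * b^2 \<le> h^2 * b^2" using mult_right_mono[of "min 1 (h^2)" "h^2" "b^2"] by simp
      ultimately show ?thesis by (simp add: algebra_simps)
    qed
    then show ?thesis using p by (simp add: le_divide_eq)
  qed
  finally show ?thesis .
qed

lemma Kcont: assumes "h > 0"
  shows "continuous_on UNIV (\<lambda>p::real\<times>real. 1 + Kfun h (fst p) (snd p) * snd p)"
proof -
  have "\<And>p::real\<times>real. (1 + ((fst p)^2 + (snd p)^2)) * (h^2 + ((fst p)^2 + (snd p)^2)) \<noteq> 0"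
  proof -
    fix p :: "real\<times>real"
    have "(1 + ((fst p)^2 + (snd p)^2)) * (h^2 + ((fst p)^2 + (snd p)^2)) > 0"
      using assms by (intro mult_pos_pos add_pos_nonneg) auto
    then show "(1 + ((fst p)^2 + (snd p)^2)) * (h^2 + ((fst p)^2 + (snd p)^2)) \<noteq> 0" by linarith
  qed
  then show ?thesis unfolding Kfun_def by (intro continuous_intros) auto
qed

lemma Kunif: assumes "h > 0"
  shows "\<exists>\<delta>>0. \<forall>a b. a^2 + b^2 \<le> B \<longrightarrow> \<bar>a\<bar> \<le> \<delta> \<longrightarrow> 1 + Kfun h a b * b \<ge> min 1 (h^2) / 2"
proof -
  define g where "g = (\<lambda>p::real\<times>real. 1 + Kfun h (fst p) (snd p) * snd p)"
  define C where "C = cball (0::real\<times>real) (sqrt (max B 0))"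
  have "uniformly_continuous_on C g"
    unfolding C_def g_def
    by (rule compact_uniformly_continuous[OF continuous_on_subset[OF Kcont[OF assms]]]) auto
  moreover have e: "min 1 (h^2) / 2 > 0" using assms by simp
  ultimately obtain d where d: "d > 0"
    "\<And>x x'. x \<in> C \<Longrightarrow> x' \<in> C \<Longrightarrow> dist x' x < d \<Longrightarrow> dist (g x') (g x) < min 1 (h^2) / 2"
    unfolding uniformly_continuous_on_def by metis
  show ?thesis
  proof (intro exI[of _ "d/2"] conjI allI impI)
    show "d/2 > 0" using d by simp
    fix a b :: real assume ab: "a^2 + b^2 \<le> B" "\<bar>a\<bar> \<le> d/2"
    have B0: "a^2 + b^2 \<le> max B 0" using ab by simp
    have "norm (a,b) = sqrt (a^2 + b^2)" by (simp add: norm_Pair)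
    also have "\<dots> \<le> sqrt (max B 0)" using B0 by (rule real_sqrt_le_mono)
    finally have inC1: "(a,b) \<in> C" unfolding C_def by (simp only: mem_cball_0)
    have "norm ((0::real),b) = sqrt (b^2)" by (simp add: norm_Pair)
    also have "\<dots> \<le> sqrt (max B 0)" using B0 zero_le_power2[of a]
      by (intro real_sqrt_le_mono) linarith
    finally have inC2: "((0::real),b) \<in> C" unfolding C_def by (simp only: mem_cball_0)
    have "dist (a,b) (0,b) < d" using ab d by (simp add: dist_Pair_Pair)
    hence "dist (g (a,b)) (g (0,b)) < min 1 (h^2) / 2" using d(2) inC1 inC2 by blast
    moreover have "g (0,b) \<ge> min 1 (h^2)" unfolding g_def using K0[OF assms] by simp
    ultimately have "g (a,b) \<ge> min 1 (h^2) / 2"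
      by (simp only: dist_real_def abs_less_iff) linarith
    thus "1 + Kfun h a b * b \<ge> min 1 (h^2) / 2" by (simp add: g_def)
  qed
qed

definition sol where
  "sol h \<tau> \<mu> \<longleftrightarrow> (\<forall>s. (\<tau> has_real_derivative (1 + Kfun h (\<tau> s) (\<mu> s) * \<mu> s)) (at s))
      \<and> (\<forall>s. (\<mu> has_real_derivative (- Kfun h (\<tau> s) (\<mu> s) * \<tau> s)) (at s))"

lemma rho_deriv: assumes "sol h \<tau> \<mu>"
  shows "((\<lambda>t. (\<tau> t)^2 + (\<mu> t)^2) has_real_derivative 2 * \<tau> s) (at s)"
proof -
  have "((\<lambda>t. (\<tau> t)^2 + (\<mu> t)^2) has_real_derivative
      2 * \<tau> s * (1 + Kfun h (\<tau> s) (\<mu> s) * \<mu> s) + 2 * \<mu> s * (- Kfun h (\<tau> s) (\<mu> s) * \<tau> s)) (at s)"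
    using assms unfolding sol_def by (auto intro!: derivative_eq_intros)
  then show ?thesis by (simp add: algebra_simps)
qed

lemma sol_reflect: assumes "sol h \<tau> \<mu>" shows "sol h (\<lambda>s. - \<tau> (- s)) (\<lambda>s. - \<mu> (- s))"
  unfolding sol_def
proof (intro conjI allI)
  fix s
  have "((\<lambda>s. - \<tau> (- s)) has_real_derivative - ((1 + Kfun h (\<tau> (-s)) (\<mu> (-s)) * \<mu> (-s)) * (-1))) (at s)"
    using assms unfolding sol_def
    by (auto intro!: derivative_eq_intros DERIV_chain2[where f=\<tau>])
  then show "((\<lambda>s. - \<tau> (- s)) has_real_derivative
      1 + Kfun h (- \<tau> (- s)) (- \<mu> (- s)) * - \<mu> (- s)) (at s)" by (simp add: Kneg add.commute)
  have "((\<lambda>s. - \<mu> (- s)) has_real_derivative - ((- Kfun h (\<tau> (-s)) (\<mu> (-s)) * \<tau> (-s)) * (-1))) (at s)"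
    using assms unfolding sol_def
    by (auto intro!: derivative_eq_intros DERIV_chain2[where f=\<mu>])
  then show "((\<lambda>s. - \<mu> (- s)) has_real_derivative
      - Kfun h (- \<tau> (- s)) (- \<mu> (- s)) * - \<tau> (- s)) (at s)" by (simp add: Kneg add.commute)
qed

lemma sol_tau: "sol h \<tau> \<mu> \<Longrightarrow> (\<tau> has_real_derivative (1 + Kfun h (\<tau> s) (\<mu> s) * \<mu> s)) (at s)"
  unfolding sol_def by blast

lemma after_zero:
  assumes S: "sol h \<tau> \<mu>" and h: "h > 0" and a: "\<tau> a = 0" and t: "t > a"
  shows "\<tau> t > 0"
proof (rule cross[where f'="\<lambda>s. 1 + Kfun h (\<tau> s) (\<mu> s) * \<mu> s", OF sol_tau[OF S] _ _ t])
  fix x assume "\<tau> x = 0"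
  then show "1 + Kfun h (\<tau> x) (\<mu> x) * \<mu> x > 0"
  proof -
    have "min 1 (h^2) > 0" using h by simp
    moreover have "1 + Kfun h (\<tau> x) (\<mu> x) * \<mu> x \<ge> min 1 (h^2)"
      using K0[OF h, of "\<mu> x"] \<open>\<tau> x = 0\<close> by simp
    ultimately show ?thesis by linarith
  qed
qed (use a in simp)

lemma eventually_nonneg:
  assumes S: "sol h \<tau> \<mu>" and h: "h > 0"
  shows "\<exists>s\<ge>s1. \<tau> s \<ge> 0"
proof (rule ccontr)
  assume "\<not> ?thesis"
  hence neg: "\<And>s. s \<ge> s1 \<Longrightarrow> \<tau> s < 0" by force
  define \<rho> where "\<rho> = (\<lambda>t. (\<tau> t)^2 + (\<mu> t)^2)"
  have rd: "\<And>x. (\<rho> has_real_derivative 2 * \<tau> x) (at x)" unfolding \<rho>_def by (rule rho_deriv[OF S])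
  have r0: "\<And>x. \<rho> x \<ge> 0" unfolding \<rho>_def by simp
  define Rb where "Rb = \<rho> s1"
  have rle: "\<rho> s \<le> Rb" if "s \<ge> s1" for s
    using slope_le[OF rd that, of 0] neg unfolding Rb_def by force
  obtain \<delta> where \<delta>: "\<delta> > 0"
    "\<And>a b. a^2 + b^2 \<le> Rb \<Longrightarrow> \<bar>a\<bar> \<le> \<delta> \<Longrightarrow> 1 + Kfun h a b * b \<ge> min 1 (h^2) / 2"
    using Kunif[OF h, of Rb] by blast
  define c where "c = min 1 (h^2) / 2"
  have c: "c > 0" using h unfolding c_def by simp
  have "\<exists>s2\<ge>s1. \<tau> s2 > - \<delta>"
  proof (rule ccontr)
    assume "\<not> ?thesis"
    hence le: "\<And>s. s \<ge> s1 \<Longrightarrow> 2 * \<tau> s \<le> - 2 * \<delta>" by force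
    define T where "T = Rb / \<delta> + 1"
    have T: "T \<ge> 0" "\<delta> * T = Rb + \<delta>" using \<delta>(1) r0[of s1] unfolding T_def Rb_def
      by (auto simp: field_simps)
    have "\<rho> (s1 + T) \<le> \<rho> s1 + (- 2 * \<delta>) * (s1 + T - s1)"
      by (rule slope_le[OF rd]) (use T le in auto)
    also have "\<dots> = - Rb - 2 * \<delta>" using T unfolding Rb_def by (simp add: algebra_simps)
    finally show False using r0[of "s1 + T"] r0[of s1] \<delta>(1) unfolding Rb_def by linarith
  qed
  then obtain s2 where s2: "s2 \<ge> s1" "\<tau> s2 > - \<delta>" by blast
  have gt: "\<tau> t > - \<delta>" if "t \<ge> s2" for t
  proof (cases "t = s2")
    case True then show ?thesis using s2 by simp
  next
    case False
    show ?thesis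
    proof (rule cross[where f'="\<lambda>s. 1 + Kfun h (\<tau> s) (\<mu> s) * \<mu> s", OF sol_tau[OF S] _ _])
      fix x assume x: "x \<ge> s2" "\<tau> x = - \<delta>"
      have "1 + Kfun h (\<tau> x) (\<mu> x) * \<mu> x \<ge> c"
        unfolding c_def using \<delta>(2)[of "\<tau> x" "\<mu> x"] rle[of x] x s2 \<delta>(1) unfolding \<rho>_def by auto
      then show "1 + Kfun h (\<tau> x) (\<mu> x) * \<mu> x > 0" using c by linarith
    qed (use s2 that False in auto)
  qed
  define T where "T = \<delta> / c"
  have T: "T \<ge> 0" "c * T = \<delta>" using c \<delta>(1) unfolding T_def by auto
  have "\<tau> (s2 + T) \<ge> \<tau> s2 + c * (s2 + T - s2)"
  proof (rule slope_ge[OF sol_tau[OF S]])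
    fix x assume x: "s2 \<le> x" "x \<le> s2 + T"
    have "\<bar>\<tau> x\<bar> \<le> \<delta>" using gt[of x] neg[of x] x s2 by auto
    then show "1 + Kfun h (\<tau> x) (\<mu> x) * \<mu> x \<ge> c"
      unfolding c_def using \<delta>(2)[of "\<tau> x" "\<mu> x"] rle[of x] x s2 unfolding \<rho>_def by auto
  qed (use T in auto)
  hence "\<tau> (s2 + T) > 0" using T s2 by simp
  moreover have "\<tau> (s2 + T) < 0" using neg[of "s2 + T"] s2 T by simp
  ultimately show False by simp
qed

lemma lim_top:
  assumes S: "sol h \<tau> \<mu>" and h: "h > 0" and z: "\<tau> s0 = 0"
  shows "filterlim (\<lambda>t. (\<tau> t)^2 + (\<mu> t)^2) at_top at_top"
proof -
  define \<rho> where "\<rho> = (\<lambda>t. (\<tau> t)^2 + (\<mu> t)^2)"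
  have rd: "\<And>x. (\<rho> has_real_derivative 2 * \<tau> x) (at x)" unfolding \<rho>_def by (rule rho_deriv[OF S])
  have r0: "\<And>x. \<rho> x \<ge> 0" unfolding \<rho>_def by simp
  have pos: "\<And>t. t \<ge> s0 \<Longrightarrow> \<tau> t \<ge> 0"
    using after_zero[OF S h z] z by (metis order_le_less)
  have mono: "\<rho> t \<le> \<rho> s" if "s0 \<le> t" "t \<le> s" for s t
    using slope_ge[OF rd that(2), of 0] pos that by force
  define c where "c = min 1 (h^2) / 2"
  have c: "c > 0" using h unfolding c_def by simp
  have ex: "\<exists>t\<ge>s0. \<rho> t \<ge> Z" for Z
  proof (rule ccontr)
    assume "\<not> ?thesis"
    hence lt: "\<And>t. t \<ge> s0 \<Longrightarrow> \<rho> t < Z" by force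
    obtain \<delta> where \<delta>: "\<delta> > 0"
      "\<And>a b. a^2 + b^2 \<le> Z \<Longrightarrow> \<bar>a\<bar> \<le> \<delta> \<Longrightarrow> 1 + Kfun h a b * b \<ge> min 1 (h^2) / 2"
      using Kunif[OF h, of Z] by blast
    have "\<exists>s3\<ge>s0. \<tau> s3 \<ge> \<delta>"
    proof (rule ccontr)
      assume "\<not> ?thesis"
      hence small: "\<And>s. s \<ge> s0 \<Longrightarrow> \<tau> s < \<delta>" by force
      define T where "T = \<delta> / c"
      have T: "T \<ge> 0" "c * T = \<delta>" using c \<delta>(1) unfolding T_def by auto
      have "\<tau> (s0 + T) \<ge> \<tau> s0 + c * (s0 + T - s0)"
      proof (rule slope_ge[OF sol_tau[OF S]])
        fix x assume x: "s0 \<le> x" "x \<le> s0 + T"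
        have "\<bar>\<tau> x\<bar> \<le> \<delta>" using pos[of x] small[of x] x by auto
        then show "1 + Kfun h (\<tau> x) (\<mu> x) * \<mu> x \<ge> c"
          unfolding c_def using \<delta>(2)[of "\<tau> x" "\<mu> x"] lt[of x] x unfolding \<rho>_def by auto
      qed (use T in auto)
      hence "\<tau> (s0 + T) \<ge> \<delta>" using T z by simp
      thus False using small[of "s0 + T"] T by simp
    qed
    then obtain s3 where s3: "s3 \<ge> s0" "\<tau> s3 \<ge> \<delta>" by blast
    have ge: "\<tau> t \<ge> \<delta>" if "t \<ge> s3" for t
    proof (cases "t = s3")
      case True then show ?thesis using s3 by simp
    next
      case False
      have "\<tau> t > \<delta>"
      proof (rule cross[where f'="\<lambda>s. 1 + Kfun h (\<tau> s) (\<mu> s) * \<mu> s", OF sol_tau[OF S] _ _])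
        fix x assume x: "x \<ge> s3" "\<tau> x = \<delta>"
        have "1 + Kfun h (\<tau> x) (\<mu> x) * \<mu> x \<ge> c"
          unfolding c_def using \<delta>(2)[of "\<tau> x" "\<mu> x"] lt[of x] x s3 \<delta>(1) unfolding \<rho>_def by auto
        then show "1 + Kfun h (\<tau> x) (\<mu> x) * \<mu> x > 0" using c by linarith
      qed (use s3 that False in auto)
      then show ?thesis by simp
    qed
    define T where "T = \<bar>Z\<bar> / \<delta> + 1"
    have T: "T \<ge> 0" "\<delta> * T = \<bar>Z\<bar> + \<delta>" using \<delta>(1) unfolding T_def
      by (auto simp: field_simps)
    have "\<rho> (s3 + T) \<ge> \<rho> s3 + (2 * \<delta>) * (s3 + T - s3)"
      by (rule slope_ge[OF rd]) (use T ge in auto)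
    also have "\<rho> s3 + (2 * \<delta>) * (s3 + T - s3) = \<rho> s3 + 2 * \<bar>Z\<bar> + 2 * \<delta>" using T by (simp add: algebra_simps)
    finally have "\<rho> (s3 + T) > Z" using r0[of s3] \<delta>(1) by linarith
    thus False using lt[of "s3 + T"] s3 T by simp
  qed
  show ?thesis unfolding filterlim_at_top eventually_at_top_linorder \<rho>_def[symmetric]
  proof
    fix Z obtain t where t: "t \<ge> s0" "\<rho> t \<ge> Z" using ex by blast
    show "\<exists>N. \<forall>n\<ge>N. Z \<le> \<rho> n" using t mono by (intro exI[of _ t]) (auto intro: order.trans)
  qed
qed


theorem claim3:
  fixes h :: real and \<tau> \<mu> :: "real \<Rightarrow> real"
  assumes hpos: "h > 0"
    and tau_ode: "\<And>s. (\<tau> has_real_derivative (1 + Kfun h (\<tau> s) (\<mu> s) * \<mu> s)) (at s)"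
    and mu_ode: "\<And>s. (\<mu> has_real_derivative (- Kfun h (\<tau> s) (\<mu> s) * \<tau> s)) (at s)"
  shows "\<exists>s0. \<tau> s0 = 0 \<and> (\<forall>s. \<tau> s = 0 \<longrightarrow> s = s0)
           \<and> (\<forall>s. s < s0 \<longrightarrow> \<tau> s < 0) \<and> (\<forall>s. s > s0 \<longrightarrow> \<tau> s > 0)
           \<and> (\<forall>s. (\<tau> s0)^2 + (\<mu> s0)^2 \<le> (\<tau> s)^2 + (\<mu> s)^2)
           \<and> (\<forall>s. ((\<lambda>t. (\<tau> t)^2 + (\<mu> t)^2) has_real_derivative 0) (at s) \<longleftrightarrow> s = s0)
           \<and> filterlim (\<lambda>t. (\<tau> t)^2 + (\<mu> t)^2) at_top at_top
           \<and> filterlim (\<lambda>t. (\<tau> t)^2 + (\<mu> t)^2) at_top at_bot"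
proof -
  have S: "sol h \<tau> \<mu>" unfolding sol_def using tau_ode mu_ode by blast
  have S': "sol h (\<lambda>s. - \<tau> (- s)) (\<lambda>s. - \<mu> (- s))" by (rule sol_reflect[OF S])
  obtain p where p: "p \<ge> 0" "\<tau> p \<ge> 0" using eventually_nonneg[OF S hpos, of 0] by blast
  obtain q where q: "q \<ge> 0" "- \<tau> (- q) \<ge> 0" using eventually_nonneg[OF S' hpos, of 0] by blast
  have cont: "\<And>x. isCont \<tau> x" using tau_ode DERIV_isCont by blast
  obtain s0 where s0: "\<tau> s0 = 0" using IVT[of \<tau> "-q" 0 p] p q cont by auto
  have after: "\<And>s. s > s0 \<Longrightarrow> \<tau> s > 0" using after_zero[OF S hpos s0] by blast
  have before: "\<tau> s < 0" if "s < s0" for s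
    using after_zero[OF S' hpos, of "- s0" "- s"] s0 that by simp
  have uniq: "\<And>s. \<tau> s = 0 \<Longrightarrow> s = s0"
    using after before by (metis less_irrefl linorder_neqE_linordered_idom)
  define \<rho> where "\<rho> = (\<lambda>t. (\<tau> t)^2 + (\<mu> t)^2)"
  have rd: "\<And>x. (\<rho> has_real_derivative 2 * \<tau> x) (at x)" unfolding \<rho>_def by (rule rho_deriv[OF S])
  have minr: "\<rho> s0 \<le> \<rho> s" for s
  proof (cases "s0 \<le> s")
    case True
    show ?thesis using slope_ge[OF rd True, of 0] after s0 by (force simp: order_le_less)
  next
    case False
    hence "s \<le> s0" by simp
    show ?thesis using slope_le[OF rd \<open>s \<le> s0\<close>, of 0] before s0 by (force simp: order_le_less)
  qed
  have crit: "(\<rho> has_real_derivative 0) (at s) \<longleftrightarrow> s = s0" for s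
  proof
    assume "(\<rho> has_real_derivative 0) (at s)"
    hence "2 * \<tau> s = 0" using DERIV_unique rd by blast
    thus "s = s0" using uniq by simp
  next
    assume "s = s0" thus "(\<rho> has_real_derivative 0) (at s)" using rd[of s0] s0 by simp
  qed
  have lt: "filterlim \<rho> at_top at_top" unfolding \<rho>_def by (rule lim_top[OF S hpos s0])
  have "filterlim (\<lambda>t. (- \<tau> (- t))^2 + (- \<mu> (- t))^2) at_top at_top"
    by (rule lim_top[OF S' hpos, of "- s0"]) (simp add: s0)
  hence lb: "filterlim \<rho> at_top at_bot" unfolding filterlim_at_bot_mirror \<rho>_def by simp
  show ?thesis
    using s0 uniq before after minr crit lt lb unfolding \<rho>_def by blast
qed

end
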